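(* Let $d\ge2$, $\alpha\in(0,\infty)^d$ and $N\in\mathbb Z_+$. For all $r,s\in N\Delta_{(d-1)}$ and $0\le n\le N$, $$H^{\alpha}_n(r,s)=\frac{N_{[n]}}{(|\alpha|+N)_{(n)}}\sum_{m=0}^{n}a^{|\alpha|}_{nm}\,\chi^{H,\alpha}_m(r,s),$$ where $$\chi^{H,\alpha}_m(r,s)=\sum_{l\in\mathbb Z_+^d,\,|l|=m}\frac{1}{DM_\alpha(l;m)}\left(\frac{\binom{m}{l}p_l(r)}{N_{[m]}}\right)\left(\frac{\binom{m}{l}p_l(s)}{N_{[m]}}\right),\qquad p_l(r)=\prod_{i=1}^d (r_i)_{[l_i]}.$$
   Context: $N\Delta_{(d-1)}=\{r\in\mathbb Z_+^d:|r|=N\}$, $|v|=\sum_iv_i$, $\binom{m}{l}=m!/\prod_il_i!$. $(c)_{(k)}=\Gamma(c+k)/\Gamma(c)$, $c_{[k]}=c(c-1)\cdots(c-k+1)$. $DM_\alpha(l;M)=\binom{M}{l}\prod_i(\alpha_i)_{(l_i)}/(|\alpha|)_{(M)}$. The Hahn kernel $H^\alpha_n(r,s)=\sum_kP_k(r)P_k(s)$ with $(P_k)$ an orthonormal basis in $L^2(DM_\alpha(\cdot;N))$ of the polynomials of degree $\le n$ orthogonal to all polynomials of degree $<n$. $a^{\theta}_{nm}=(\theta+2n-1)(-1)^{n-m}\frac{(\theta+m)_{(n-1)}}{m!(n-m)!}$, $0\le m\le n$ (with $a^\theta_{00}=1$). *)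

theory Defs
  imports Complex_Main
begin

text \<open>Multi-indices / points of N Delta_(d-1) are functions nat => nat supported on {..<d}.\<close>

definition simplex :: "nat \<Rightarrow> nat \<Rightarrow> (nat \<Rightarrow> nat) set" where
  "simplex d N = {r. (\<forall>i. d \<le> i \<longrightarrow> r i = 0) \<and> (\<Sum>i<d. r i) = N}"

definition midx_le :: "nat \<Rightarrow> nat \<Rightarrow> (nat \<Rightarrow> nat) set" where
  "midx_le d n = {l. (\<forall>i. d \<le> i \<longrightarrow> l i = 0) \<and> (\<Sum>i<d. l i) \<le> n}"

definition ffact :: "real \<Rightarrow> nat \<Rightarrow> real" where
  "ffact c k = (\<Prod>i<k. c - real i)"

definition multinom :: "nat \<Rightarrow> nat \<Rightarrow> (nat \<Rightarrow> nat) \<Rightarrow> real" where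
  "multinom d m l = fact m / (\<Prod>i<d. fact (l i))"

definition abs_alpha :: "nat \<Rightarrow> (nat \<Rightarrow> real) \<Rightarrow> real" where
  "abs_alpha d \<alpha> = (\<Sum>i<d. \<alpha> i)"

definition DM :: "nat \<Rightarrow> (nat \<Rightarrow> real) \<Rightarrow> (nat \<Rightarrow> nat) \<Rightarrow> nat \<Rightarrow> real" where
  "DM d \<alpha> l M = multinom d M l * (\<Prod>i<d. pochhammer (\<alpha> i) (l i))
                   / pochhammer (abs_alpha d \<alpha>) M"

definition ipDM :: "nat \<Rightarrow> (nat \<Rightarrow> real) \<Rightarrow> nat \<Rightarrow> ((nat \<Rightarrow> nat) \<Rightarrow> real)
                     \<Rightarrow> ((nat \<Rightarrow> nat) \<Rightarrow> real) \<Rightarrow> real" where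
  "ipDM d \<alpha> N f g = (\<Sum>r\<in>simplex d N. DM d \<alpha> r N * f r * g r)"

definition monom :: "nat \<Rightarrow> (nat \<Rightarrow> nat) \<Rightarrow> (nat \<Rightarrow> nat) \<Rightarrow> real" where
  "monom d l r = (\<Prod>i<d. real (r i) ^ l i)"

definition polys_le :: "nat \<Rightarrow> nat \<Rightarrow> nat \<Rightarrow> ((nat \<Rightarrow> nat) \<Rightarrow> real) set" where
  "polys_le d N n = {f. \<exists>c. \<forall>r\<in>simplex d N. f r = (\<Sum>l\<in>midx_le d n. c l * monom d l r)}"

definition orth_polys :: "nat \<Rightarrow> (nat \<Rightarrow> real) \<Rightarrow> nat \<Rightarrow> nat \<Rightarrow> ((nat \<Rightarrow> nat) \<Rightarrow> real) set" where
  "orth_polys d \<alpha> N n = {f. f \<in> polys_le d N n \<and>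
      (\<forall>g. (\<exists>k<n. g \<in> polys_le d N k) \<longrightarrow> ipDM d \<alpha> N f g = 0)}"

definition is_onb :: "nat \<Rightarrow> (nat \<Rightarrow> real) \<Rightarrow> nat \<Rightarrow> nat \<Rightarrow> ((nat \<Rightarrow> nat) \<Rightarrow> real) list \<Rightarrow> bool" where
  "is_onb d \<alpha> N n Ps \<longleftrightarrow>
     (\<forall>P\<in>set Ps. P \<in> orth_polys d \<alpha> N n) \<and>
     (\<forall>j<length Ps. \<forall>k<length Ps. ipDM d \<alpha> N (Ps!j) (Ps!k) = (if j = k then 1 else 0)) \<and>
     (\<forall>f\<in>orth_polys d \<alpha> N n. \<exists>c. \<forall>r\<in>simplex d N. f r = (\<Sum>k<length Ps. c k * (Ps!k) r))"

definition a_coef :: "real \<Rightarrow> nat \<Rightarrow> nat \<Rightarrow> real" where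
  "a_coef \<theta> n m = (if n = 0 then 1 else
     (\<theta> + 2 * real n - 1) * (-1) ^ (n - m) * pochhammer (\<theta> + real m) (n - 1)
       / (fact m * fact (n - m)))"

definition p_l :: "nat \<Rightarrow> (nat \<Rightarrow> nat) \<Rightarrow> (nat \<Rightarrow> nat) \<Rightarrow> real" where
  "p_l d l r = (\<Prod>i<d. ffact (real (r i)) (l i))"

definition chiH :: "nat \<Rightarrow> (nat \<Rightarrow> real) \<Rightarrow> nat \<Rightarrow> nat \<Rightarrow> (nat \<Rightarrow> nat) \<Rightarrow> (nat \<Rightarrow> nat) \<Rightarrow> real" where
  "chiH d \<alpha> N m r s = (\<Sum>l\<in>simplex d m.
      (1 / DM d \<alpha> l m) * (multinom d m l * p_l d l r / ffact (real N) m)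
                       * (multinom d m l * p_l d l s / ffact (real N) m))"

end

theory Submission
  imports Defs "HOL-Computational_Algebra.Polynomial"
begin


lemma finite_supp_bounded:
  "finite {l::nat\<Rightarrow>nat. (\<forall>i. d \<le> i \<longrightarrow> l i = 0) \<and> (\<forall>i<d. l i \<le> K)}"
proof -
  have "{l::nat\<Rightarrow>nat. (\<forall>i. d \<le> i \<longrightarrow> l i = 0) \<and> (\<forall>i<d. l i \<le> K)}
     = {f. \<forall>x. (x \<in> {..<d} \<longrightarrow> f x \<in> {..K}) \<and> (x \<notin> {..<d} \<longrightarrow> f x = 0)}"
    by (rule Collect_cong) (metis lessThan_iff atMost_iff not_le)
  then show ?thesis using finite_set_of_finite_funs[of "{..<d}" "{..K}" 0] by simp
qed

lemma sum_le_bound: fixes f :: "'a \<Rightarrow> nat" shows "finite A \<Longrightarrow> i \<in> A \<Longrightarrow> f i \<le> sum f A"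
  by (rule member_le_sum) auto

lemma finite_simplex: "finite (simplex d N)"
proof (rule finite_subset[OF _ finite_supp_bounded[of d N]])
  show "simplex d N \<subseteq> {l. (\<forall>i. d \<le> i \<longrightarrow> l i = 0) \<and> (\<forall>i<d. l i \<le> N)}"
    unfolding simplex_def
  proof (safe)
    fix l :: "nat \<Rightarrow> nat" and i assume "i < d"
    then show "l i \<le> sum l {..<d}" using sum_le_bound[of "{..<d}" i l] by simp
  qed
qed

definition midx_lt :: "nat \<Rightarrow> nat \<Rightarrow> (nat \<Rightarrow> nat) set" where
  "midx_lt d k = {l. (\<forall>i. d \<le> i \<longrightarrow> l i = 0) \<and> (\<Sum>i<d. l i) < k}"

lemma finite_midx_lt: "finite (midx_lt d k)"
proof (rule finite_subset[OF _ finite_supp_bounded[of d k]])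
  show "midx_lt d k \<subseteq> {l. (\<forall>i. d \<le> i \<longrightarrow> l i = 0) \<and> (\<forall>i<d. l i \<le> k)}"
    unfolding midx_lt_def
  proof (safe)
    fix l i assume "(\<Sum>i<d. l i) < k" "i < d"
    then show "l i \<le> k" using sum_le_bound[of "{..<d}" i l] by simp
  qed
qed

lemma simplex_Suc_sum:
  "(\<Sum>u\<in>simplex (Suc d) M. F u) = (\<Sum>t\<le>M. \<Sum>v\<in>simplex d (M-t). F (v(d:=t)))"
proof -
  have "(\<Sum>t\<le>M. \<Sum>v\<in>simplex d (M-t). F (v(d:=t)))
      = (\<Sum>p\<in>(SIGMA t:{..M}. simplex d (M-t)). F ((snd p)(d := fst p)))"
    by (simp add: sum.Sigma split_beta finite_simplex)
  also have "\<dots> = (\<Sum>u\<in>simplex (Suc d) M. F u)"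
  proof (rule sum.reindex_bij_betw)
    show "bij_betw (\<lambda>p. (snd p)(d := fst p)) (SIGMA t:{..M}. simplex d (M - t)) (simplex (Suc d) M)"
    proof (rule bij_betw_byWitness[where f'="\<lambda>u. (u d, u(d:=0))"])
      show "(\<lambda>p. (snd p)(d := fst p)) ` (SIGMA t:{..M}. simplex d (M - t)) \<subseteq> simplex (Suc d) M"
        by (auto simp: simplex_def)
      show "(\<lambda>u. (u d, u(d := 0))) ` simplex (Suc d) M \<subseteq> (SIGMA t:{..M}. simplex d (M - t))"
      proof
        fix x assume "x \<in> (\<lambda>u. (u d, u(d := 0))) ` simplex (Suc d) M"
        then obtain u where u: "u \<in> simplex (Suc d) M" and x: "x = (u d, u(d:=0))" by auto
        then have s: "(\<Sum>i<d. u i) + u d = M" by (simp add: simplex_def)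
        have e: "(\<Sum>i<d. (u(d:=0)) i) = (\<Sum>i<d. u i)" by (rule sum.cong) auto
        show "x \<in> (SIGMA t:{..M}. simplex d (M - t))"
          using u s e x by (auto simp: simplex_def)
      qed
      show "\<forall>p\<in>(SIGMA t:{..M}. simplex d (M - t)). (((snd p)(d := fst p)) d, ((snd p)(d := fst p))(d := 0)) = p"
        by (auto simp: simplex_def fun_eq_iff)
      show "\<forall>u\<in>simplex (Suc d) M. (snd (u d, u(d := 0)))(d := fst (u d, u(d := 0))) = u" by auto
    qed
  qed
  finally show ?thesis by simp
qed

lemma simplex_0: "simplex 0 M = (if M = 0 then {\<lambda>_. 0} else {})"
  by (auto simp: simplex_def)

lemma MV:
  fixes \<beta> :: "nat \<Rightarrow> real"
  shows "(\<Sum>u\<in>simplex d M. multinom d M u * (\<Prod>i<d. pochhammer (\<beta> i) (u i)))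
         = pochhammer (\<Sum>i<d. \<beta> i) M"
proof (induction d arbitrary: M)
  case 0
  then show ?case by (auto simp: simplex_0 multinom_def pochhammer_0_left)
next
  case (Suc d)
  have "(\<Sum>u\<in>simplex (Suc d) M. multinom (Suc d) M u * (\<Prod>i<Suc d. pochhammer (\<beta> i) (u i)))
      = (\<Sum>t\<le>M. \<Sum>v\<in>simplex d (M-t). multinom (Suc d) M (v(d:=t)) * (\<Prod>i<Suc d. pochhammer (\<beta> i) ((v(d:=t)) i)))"
    by (rule simplex_Suc_sum)
  also have "\<dots> = (\<Sum>t\<le>M. of_nat (M choose t) * pochhammer (\<beta> d) t *
         (\<Sum>v\<in>simplex d (M-t). multinom d (M-t) v * (\<Prod>i<d. pochhammer (\<beta> i) (v i))))"
  proof (rule sum.cong[OF refl])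
    fix t assume t: "t \<in> {..M}"
    show "(\<Sum>v\<in>simplex d (M-t). multinom (Suc d) M (v(d:=t)) * (\<Prod>i<Suc d. pochhammer (\<beta> i) ((v(d:=t)) i)))
       = of_nat (M choose t) * pochhammer (\<beta> d) t *
         (\<Sum>v\<in>simplex d (M-t). multinom d (M-t) v * (\<Prod>i<d. pochhammer (\<beta> i) (v i)))"
      unfolding sum_distrib_left
    proof (rule sum.cong[OF refl])
      fix v
      have p1: "(\<Prod>i<d. pochhammer (\<beta> i) ((v(d:=t)) i)) = (\<Prod>i<d. pochhammer (\<beta> i) (v i))"
        by (rule prod.cong) auto
      have p2: "(\<Prod>i<d. fact ((v(d:=t)) i)::real) = (\<Prod>i<d. fact (v i))"
        by (rule prod.cong) auto
      have nz: "(\<Prod>i<d. fact (v i)::real) \<noteq> 0" by simp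
      have ch: "real (M choose t) = fact M / (fact t * fact (M - t))"
        using t by (simp add: binomial_fact)
      show "multinom (Suc d) M (v(d:=t)) * (\<Prod>i<Suc d. pochhammer (\<beta> i) ((v(d:=t)) i))
          = of_nat (M choose t) * pochhammer (\<beta> d) t * (multinom d (M-t) v * (\<Prod>i<d. pochhammer (\<beta> i) (v i)))"
        unfolding multinom_def using nz
        by (simp add: p1 p2 ch field_simps)
    qed
  qed
  also have "\<dots> = (\<Sum>t\<le>M. of_nat (M choose t) * pochhammer (\<beta> d) t * pochhammer (\<Sum>i<d. \<beta> i) (M - t))"
    by (simp add: Suc.IH)
  also have "\<dots> = pochhammer (\<beta> d + (\<Sum>i<d. \<beta> i)) M"
    by (rule pochhammer_binomial_sum[symmetric])
  also have "\<dots> = pochhammer (\<Sum>i<Suc d. \<beta> i) M" by (simp add: add.commute)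
  finally show ?case .
qed



lemma ffact_nat: "k \<le> n \<Longrightarrow> ffact (real n) k = fact n / fact (n - k)"
proof (induction k)
  case 0 then show ?case by (simp add: ffact_def)
next
  case (Suc k)
  then have "ffact (real n) (Suc k) = fact n / fact (n - k) * (real n - real k)"
    by (simp add: ffact_def)
  also have "fact (n - k) = (fact (n - Suc k) :: real) * real (n - k)"
  proof -
    have "n - k = Suc (n - Suc k)" using Suc.prems by simp
    then show ?thesis by (simp add: mult.commute)
  qed
  also have "real n - real k = real (n - k)" using Suc.prems by (simp add: of_nat_diff)
  finally show ?case using Suc.prems by simp
qed

lemma ffact_nat_zero: "n < k \<Longrightarrow> ffact (real n) k = 0"
  unfolding ffact_def by (rule prod_zero) (auto intro: bexI[of _ n])

lemma ffact_poch: "ffact x n = (-1)^n * pochhammer (- x) n"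
proof -
  have "pochhammer (- x) n = (\<Prod>i<n. (-1) * (x - real i))"
    by (simp add: pochhammer_prod atLeast0LessThan)
  also have "\<dots> = (-1)^n * ffact x n" by (simp only: prod.distrib ffact_def) simp
  finally show ?thesis by simp
qed

lemma p_l_zero: "i < d \<Longrightarrow> r i < l i \<Longrightarrow> p_l d l r = 0"
  unfolding p_l_def by (rule prod_zero) (auto intro!: bexI[of _ i] ffact_nat_zero)

lemma sum_shift:
  assumes b: "\<forall>i. d \<le> i \<longrightarrow> b i = 0" and bk: "(\<Sum>i<d. b i) = k" and kM: "k \<le> M"
  shows "(\<Sum>u\<in>simplex d M. p_l d b u * G u)
       = (\<Sum>v\<in>simplex d (M-k). p_l d b (\<lambda>i. b i + v i) * G (\<lambda>i. b i + v i))"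
proof -
  let ?T = "{u\<in>simplex d M. \<forall>i<d. b i \<le> u i}"
  have "(\<Sum>u\<in>simplex d M. p_l d b u * G u) = (\<Sum>u\<in>?T. p_l d b u * G u)"
    apply (rule sum.mono_neutral_right) apply (auto simp: finite_simplex) by (meson not_le p_l_zero)
  also have "\<dots> = (\<Sum>v\<in>simplex d (M-k). p_l d b (\<lambda>i. b i + v i) * G (\<lambda>i. b i + v i))"
  proof (rule sum.reindex_bij_betw[symmetric], rule bij_betw_byWitness[where f'="\<lambda>u i. u i - b i"])
    show "\<forall>a\<in>simplex d (M - k). (\<lambda>i. b i + a i - b i) = a" by auto
    show "\<forall>a'\<in>?T. (\<lambda>i. b i + (a' i - b i)) = a'"
    proof
      fix u assume u: "u \<in> ?T"
      show "(\<lambda>i. b i + (u i - b i)) = u"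
      proof
        fix i show "b i + (u i - b i) = u i"
          using u b by (cases "i < d") auto
      qed
    qed
    show "(\<lambda>v i. b i + v i) ` simplex d (M - k) \<subseteq> ?T"
    proof
      fix x assume "x \<in> (\<lambda>v i. b i + v i) ` simplex d (M - k)"
      then obtain v where v: "v \<in> simplex d (M-k)" and x: "x = (\<lambda>i. b i + v i)" by auto
      have "(\<Sum>i<d. b i + v i) = M" using v bk kM by (simp add: sum.distrib simplex_def)
      then show "x \<in> ?T" using v b x by (auto simp: simplex_def)
    qed
    show "(\<lambda>u i. u i - b i) ` ?T \<subseteq> simplex d (M - k)"
    proof
      fix x assume "x \<in> (\<lambda>u i. u i - b i) ` ?T"
      then obtain u where u: "u \<in> ?T" and x: "x = (\<lambda>i. u i - b i)" by auto
      have "(\<Sum>i<d. u i - b i) = (\<Sum>i<d. u i) - (\<Sum>i<d. b i)"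
        using u by (intro sum_subtractf_nat) auto
      then show "x \<in> simplex d (M - k)" using u b x bk by (auto simp: simplex_def)
    qed
  qed
  finally show ?thesis .
qed

lemma sum_shift_zero:
  assumes b: "(\<Sum>i<d. b i) = k" and kM: "M < k"
  shows "(\<Sum>u\<in>simplex d M. p_l d b u * G u) = 0"
proof (rule sum.neutral, rule ballI)
  fix u assume u: "u \<in> simplex d M"
  have "\<exists>i<d. u i < b i"
  proof (rule ccontr)
    assume "\<not> ?thesis"
    then have "(\<Sum>i<d. b i) \<le> (\<Sum>i<d. u i)" by (intro sum_mono) (metis lessThan_iff not_less)
    then show False using u b kM by (simp add: simplex_def)
  qed
  then show "p_l d b u * G u = 0" using p_l_zero by auto
qed



lemma sum_DM_1:
  assumes "pochhammer (abs_alpha d \<beta>) M \<noteq> 0"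
  shows "(\<Sum>u\<in>simplex d M. DM d \<beta> u M) = 1"
proof -
  have "(\<Sum>u\<in>simplex d M. DM d \<beta> u M)
      = (\<Sum>u\<in>simplex d M. multinom d M u * (\<Prod>i<d. pochhammer (\<beta> i) (u i))) / pochhammer (abs_alpha d \<beta>) M"
    unfolding DM_def by (simp add: sum_divide_distrib)
  also have "\<dots> = 1" using MV[of d M \<beta>] assms by (simp add: abs_alpha_def)
  finally show ?thesis .
qed

lemma abs_alpha_shift:
  assumes "l \<in> simplex d m"
  shows "abs_alpha d (\<lambda>i. \<beta> i + real (l i)) = abs_alpha d \<beta> + real m"
  using assms by (simp add: abs_alpha_def sum.distrib simplex_def flip: of_nat_sum)

lemma abs_alpha_shift':
  assumes "(\<Sum>i<d. l i) = m"
  shows "abs_alpha d (\<lambda>i. \<beta> i + real (l i)) = abs_alpha d \<beta> + real m"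
  using assms by (simp add: abs_alpha_def sum.distrib flip: of_nat_sum)

lemma DM_swap:
  assumes pos: "abs_alpha d \<beta> > 0" and jk: "(\<Sum>i<d. j i) = k"
  shows "DM d \<beta> u M * (\<Prod>i<d. pochhammer (\<beta> i + real (u i)) (j i))
       = (\<Prod>i<d. pochhammer (\<beta> i) (j i)) * (pochhammer (abs_alpha d \<beta> + real M) k / pochhammer (abs_alpha d \<beta>) k)
         * DM d (\<lambda>i. \<beta> i + real (j i)) u M"
proof -
  let ?a = "abs_alpha d \<beta>"
  have e1: "(\<Prod>i<d. pochhammer (\<beta> i) (u i)) * (\<Prod>i<d. pochhammer (\<beta> i + real (u i)) (j i))
      = (\<Prod>i<d. pochhammer (\<beta> i) (j i)) * (\<Prod>i<d. pochhammer (\<beta> i + real (j i)) (u i))"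
    unfolding prod.distrib[symmetric]
    by (rule prod.cong[OF refl]) (metis pochhammer_product' add.commute)
  have e2: "pochhammer ?a M * pochhammer (?a + real M) k = pochhammer ?a k * pochhammer (?a + real k) M"
    by (metis pochhammer_product' add.commute)
  have aj: "abs_alpha d (\<lambda>i. \<beta> i + real (j i)) = ?a + real k"
    using abs_alpha_shift'[OF jk] .
  have p1: "pochhammer ?a M > 0" "pochhammer ?a k > 0" "pochhammer (?a + real k) M > 0"
    using pos by (auto intro!: pochhammer_pos)
  show ?thesis
    unfolding DM_def aj
    using p1 e1 e2
    by (simp add: field_simps)
qed

lemma posterior_term:
  assumes apos: "abs_alpha d \<alpha> > 0"
    and l: "l \<in> simplex d m" and u: "u \<in> simplex d (N - m)" and mN: "m \<le> N"
  shows "DM d \<alpha> (\<lambda>i. l i + u i) N * (multinom d m l * p_l d l (\<lambda>i. l i + u i) / ffact (real N) m)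
       = DM d \<alpha> l m * DM d (\<lambda>i. \<alpha> i + real (l i)) u (N - m)"
proof -
  let ?a = "abs_alpha d \<alpha>"
  define FL where "FL = (\<Prod>i<d. fact (l i) :: real)"
  define FU where "FU = (\<Prod>i<d. fact (u i) :: real)"
  define FLU where "FLU = (\<Prod>i<d. fact (l i + u i) :: real)"
  define PL where "PL = (\<Prod>i<d. pochhammer (\<alpha> i) (l i))"
  define PU where "PU = (\<Prod>i<d. pochhammer (\<alpha> i + real (l i)) (u i))"
  have pl: "p_l d l (\<lambda>i. l i + u i) = FLU / FU"
    unfolding p_l_def FLU_def FU_def prod_dividef[symmetric]
    by (rule prod.cong[OF refl]) (metis ffact_nat le_add1 add_diff_cancel_left')
  have plu: "(\<Prod>i<d. pochhammer (\<alpha> i) (l i + u i)) = PL * PU"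
    unfolding PL_def PU_def prod.distrib[symmetric]
    by (rule prod.cong[OF refl]) (simp add: pochhammer_product')
  have pN: "pochhammer ?a N = pochhammer ?a m * pochhammer (?a + real m) (N - m)"
    using mN pochhammer_product'[of ?a m "N - m"] by simp
  have aa: "abs_alpha d (\<lambda>i. \<alpha> i + real (l i)) = ?a + real m"
    using abs_alpha_shift[OF l] .
  have fN: "ffact (real N) m = fact N / fact (N - m)" using mN by (simp add: ffact_nat)
  have nz: "FL \<noteq> 0" "FU \<noteq> 0" "FLU \<noteq> 0" unfolding FL_def FU_def FLU_def by auto
  have p1: "pochhammer ?a m > 0" "pochhammer (?a + real m) (N - m) > 0"
    using apos by (auto intro!: pochhammer_pos)
  show ?thesis
    unfolding DM_def multinom_def aa pl plu pN fN
    unfolding FL_def[symmetric] FU_def[symmetric] FLU_def[symmetric] PL_def[symmetric] PU_def[symmetric]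
    using nz p1 by (simp add: field_simps)
qed



definition Uop :: "nat \<Rightarrow> (nat \<Rightarrow> real) \<Rightarrow> nat \<Rightarrow> nat \<Rightarrow> ((nat \<Rightarrow> nat) \<Rightarrow> real) \<Rightarrow> (nat \<Rightarrow> nat) \<Rightarrow> real" where
  "Uop d \<alpha> N m f l = (\<Sum>u\<in>simplex d (N-m). DM d (\<lambda>i. \<alpha> i + real (l i)) u (N-m) * f (\<lambda>i. l i + u i))"

definition Dop :: "nat \<Rightarrow> nat \<Rightarrow> nat \<Rightarrow> ((nat \<Rightarrow> nat) \<Rightarrow> real) \<Rightarrow> (nat \<Rightarrow> nat) \<Rightarrow> real" where
  "Dop d N m g s = (\<Sum>l\<in>simplex d m. multinom d m l * p_l d l s / ffact (real N) m * g l)"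

definition Aop :: "nat \<Rightarrow> (nat \<Rightarrow> real) \<Rightarrow> nat \<Rightarrow> nat \<Rightarrow> ((nat \<Rightarrow> nat) \<Rightarrow> real) \<Rightarrow> (nat \<Rightarrow> nat) \<Rightarrow> real" where
  "Aop d \<alpha> N m f s = (\<Sum>r\<in>simplex d N. DM d \<alpha> r N * chiH d \<alpha> N m r s * f r)"

lemma abs_alpha_pos: "d \<ge> 1 \<Longrightarrow> (\<And>i. i < d \<Longrightarrow> \<alpha> i > 0) \<Longrightarrow> abs_alpha d \<alpha> > 0"
proof -
  assume "d \<ge> 1" "\<And>i. i < d \<Longrightarrow> \<alpha> i > 0"
  moreover have "0 \<in> {..<d}" using \<open>d \<ge> 1\<close> by simp
  then have "{..<d} \<noteq> {}" by blast
  ultimately show ?thesis unfolding abs_alpha_def by (intro sum_pos) auto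
qed

lemma DM_pos:
  assumes pos: "\<And>i. i < d \<Longrightarrow> \<alpha> i > 0" and apos: "abs_alpha d \<alpha> > 0"
  shows "DM d \<alpha> l M > 0"
  unfolding DM_def multinom_def using pos apos
  by (auto intro!: divide_pos_pos mult_pos_pos prod_pos pochhammer_pos)

lemma A_eq:
  assumes pos: "\<And>i. i < d \<Longrightarrow> \<alpha> i > 0" and apos: "abs_alpha d \<alpha> > 0" and mN: "m \<le> N"
  shows "Aop d \<alpha> N m f s = Dop d N m (Uop d \<alpha> N m f) s"
proof -
  define H where "H l r = multinom d m l * p_l d l r / ffact (real N) m" for l r
  have "Aop d \<alpha> N m f s = (\<Sum>r\<in>simplex d N. \<Sum>l\<in>simplex d m. (1 / DM d \<alpha> l m) * H l s * (DM d \<alpha> r N * H l r * f r))"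
    unfolding Aop_def chiH_def H_def
    by (rule sum.cong[OF refl]) (simp add: sum_distrib_left sum_distrib_right mult_ac)
  also have "\<dots> = (\<Sum>l\<in>simplex d m. (1 / DM d \<alpha> l m) * H l s * (\<Sum>r\<in>simplex d N. DM d \<alpha> r N * H l r * f r))"
    by (subst sum.swap) (simp add: sum_distrib_left)
  also have "\<dots> = (\<Sum>l\<in>simplex d m. H l s * Uop d \<alpha> N m f l)"
  proof (rule sum.cong[OF refl])
    fix l assume l: "l \<in> simplex d m"
    have lb: "\<forall>i. d \<le> i \<longrightarrow> l i = 0" "(\<Sum>i<d. l i) = m" using l by (auto simp: simplex_def)
    have "(\<Sum>r\<in>simplex d N. DM d \<alpha> r N * H l r * f r)
        = (\<Sum>r\<in>simplex d N. p_l d l r * (DM d \<alpha> r N * multinom d m l / ffact (real N) m * f r))"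
      unfolding H_def by (rule sum.cong[OF refl]) (simp add: field_simps)
    also have "\<dots> = (\<Sum>u\<in>simplex d (N-m). p_l d l (\<lambda>i. l i + u i) *
          (DM d \<alpha> (\<lambda>i. l i + u i) N * multinom d m l / ffact (real N) m * f (\<lambda>i. l i + u i)))"
      by (rule sum_shift[OF lb mN])
    also have "\<dots> = (\<Sum>u\<in>simplex d (N-m). DM d \<alpha> l m * (DM d (\<lambda>i. \<alpha> i + real (l i)) u (N - m) * f (\<lambda>i. l i + u i)))"
    proof (rule sum.cong[OF refl])
      fix u assume u: "u \<in> simplex d (N - m)"
      show "p_l d l (\<lambda>i. l i + u i) *
          (DM d \<alpha> (\<lambda>i. l i + u i) N * multinom d m l / ffact (real N) m * f (\<lambda>i. l i + u i))
          = DM d \<alpha> l m * (DM d (\<lambda>i. \<alpha> i + real (l i)) u (N - m) * f (\<lambda>i. l i + u i))"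
      proof -
        have e: "DM d \<alpha> (\<lambda>i. l i + u i) N * (multinom d m l * p_l d l (\<lambda>i. l i + u i) / ffact (real N) m)
           = DM d \<alpha> l m * DM d (\<lambda>i. \<alpha> i + real (l i)) u (N - m)"
          by (rule posterior_term[OF apos l u mN])
        have "p_l d l (\<lambda>i. l i + u i) *
          (DM d \<alpha> (\<lambda>i. l i + u i) N * multinom d m l / ffact (real N) m * f (\<lambda>i. l i + u i))
          = (DM d \<alpha> (\<lambda>i. l i + u i) N * (multinom d m l * p_l d l (\<lambda>i. l i + u i) / ffact (real N) m)) * f (\<lambda>i. l i + u i)"
          by (simp add: mult_ac)
        then show ?thesis unfolding e by (simp add: mult_ac)
      qed
    qed
    also have "\<dots> = DM d \<alpha> l m * Uop d \<alpha> N m f l"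
      unfolding Uop_def by (simp add: sum_distrib_left)
    finally have "(\<Sum>r\<in>simplex d N. DM d \<alpha> r N * H l r * f r) = DM d \<alpha> l m * Uop d \<alpha> N m f l" .
    moreover have "DM d \<alpha> l m \<noteq> 0" using DM_pos[OF pos apos] by (metis less_irrefl)
    ultimately show "1 / DM d \<alpha> l m * H l s * (\<Sum>r\<in>simplex d N. DM d \<alpha> r N * H l r * f r) = H l s * Uop d \<alpha> N m f l"
      by simp
  qed
  also have "\<dots> = Dop d N m (Uop d \<alpha> N m f) s"
    unfolding Dop_def H_def by simp
  finally show ?thesis .
qed

definition q_j :: "nat \<Rightarrow> (nat \<Rightarrow> real) \<Rightarrow> (nat \<Rightarrow> nat) \<Rightarrow> (nat \<Rightarrow> nat) \<Rightarrow> real" where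
  "q_j d \<alpha> j r = (\<Prod>i<d. pochhammer (\<alpha> i + real (r i)) (j i))"

lemma U_q:
  assumes pos: "\<And>i. i < d \<Longrightarrow> \<alpha> i > 0" and apos: "abs_alpha d \<alpha> > 0"
    and mN: "m \<le> N" and l: "l \<in> simplex d m" and jk: "(\<Sum>i<d. j i) = k"
  shows "Uop d \<alpha> N m (q_j d \<alpha> j) l
       = pochhammer (abs_alpha d \<alpha> + real N) k / pochhammer (abs_alpha d \<alpha> + real m) k * q_j d \<alpha> j l"
proof -
  let ?b = "\<lambda>i. \<alpha> i + real (l i)"
  have ab: "abs_alpha d ?b = abs_alpha d \<alpha> + real m" using abs_alpha_shift[OF l] .
  have bpos: "abs_alpha d ?b > 0" using ab apos by simp
  have "Uop d \<alpha> N m (q_j d \<alpha> j) l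
      = (\<Sum>u\<in>simplex d (N-m). DM d ?b u (N-m) * (\<Prod>i<d. pochhammer (?b i + real (u i)) (j i)))"
    unfolding Uop_def q_j_def by (simp add: add.assoc)
  also have "\<dots> = (\<Sum>u\<in>simplex d (N-m). (\<Prod>i<d. pochhammer (?b i) (j i)) *
        (pochhammer (abs_alpha d ?b + real (N-m)) k / pochhammer (abs_alpha d ?b) k) * DM d (\<lambda>i. ?b i + real (j i)) u (N-m))"
    by (rule sum.cong[OF refl]) (rule DM_swap[OF bpos jk])
  also have "\<dots> = (\<Prod>i<d. pochhammer (?b i) (j i)) *
        (pochhammer (abs_alpha d ?b + real (N-m)) k / pochhammer (abs_alpha d ?b) k) *
        (\<Sum>u\<in>simplex d (N-m). DM d (\<lambda>i. ?b i + real (j i)) u (N-m))"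
    by (simp add: sum_distrib_left)
  also have "(\<Sum>u\<in>simplex d (N-m). DM d (\<lambda>i. ?b i + real (j i)) u (N-m)) = 1"
  proof (rule sum_DM_1)
    have "abs_alpha d (\<lambda>i. ?b i + real (j i)) = abs_alpha d ?b + real k"
      using abs_alpha_shift'[OF jk] .
    then show "pochhammer (abs_alpha d (\<lambda>i. ?b i + real (j i))) (N - m) \<noteq> 0"
      using bpos by (metis add_pos_nonneg of_nat_0_le_iff pochhammer_pos less_irrefl)
  qed
  also have "abs_alpha d ?b + real (N - m) = abs_alpha d \<alpha> + real N" using ab mN by (simp add: of_nat_diff)
  finally show ?thesis unfolding ab q_j_def by (simp add: mult_ac)
qed



lemma ffact_add: "ffact x (a + b) = ffact x a * ffact (x - real a) b"
  unfolding ffact_poch pochhammer_product' by (simp add: power_add)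

lemma MV_falling:
  fixes x :: "nat \<Rightarrow> real"
  shows "(\<Sum>v\<in>simplex d M. multinom d M v * (\<Prod>i<d. ffact (x i) (v i))) = ffact (\<Sum>i<d. x i) M"
proof -
  have "(\<Sum>v\<in>simplex d M. multinom d M v * (\<Prod>i<d. ffact (x i) (v i)))
      = (\<Sum>v\<in>simplex d M. (-1)^M * (multinom d M v * (\<Prod>i<d. pochhammer (- x i) (v i))))"
  proof (rule sum.cong[OF refl])
    fix v assume v: "v \<in> simplex d M"
    have "(\<Prod>i<d. ffact (x i) (v i)) = (\<Prod>i<d. (-1)^(v i)) * (\<Prod>i<d. pochhammer (- x i) (v i))"
      unfolding ffact_poch prod.distrib ..
    also have "(\<Prod>i<d. (-1::real)^(v i)) = (-1)^M"
      using v by (simp add: power_sum[symmetric] simplex_def)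
    finally show "multinom d M v * (\<Prod>i<d. ffact (x i) (v i)) = (-1)^M * (multinom d M v * (\<Prod>i<d. pochhammer (- x i) (v i)))"
      by simp
  qed
  also have "\<dots> = (-1)^M * pochhammer (\<Sum>i<d. - x i) M"
    by (simp add: sum_distrib_left[symmetric] MV)
  also have "\<dots> = ffact (\<Sum>i<d. x i) M"
    by (simp add: ffact_poch sum_negf)
  finally show ?thesis .
qed

lemma D_p:
  assumes s: "s \<in> simplex d N" and b: "\<forall>i. d \<le> i \<longrightarrow> b i = 0" and bk: "(\<Sum>i<d. b i) = k"
    and mN: "m \<le> N"
  shows "Dop d N m (p_l d b) s = ffact (real m) k / ffact (real N) k * p_l d b s"
proof (cases "k \<le> m")
  case False
  have "Dop d N m (p_l d b) s = (\<Sum>l\<in>simplex d m. p_l d b l * (multinom d m l * p_l d l s / ffact (real N) m))"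
    unfolding Dop_def by (simp add: mult_ac)
  also have "\<dots> = 0" using False by (intro sum_shift_zero[OF bk]) simp
  finally show ?thesis using False by (simp add: ffact_nat_zero)
next
  case True
  have kN: "k \<le> N" using True mN by simp
  have "Dop d N m (p_l d b) s = (\<Sum>l\<in>simplex d m. p_l d b l * (multinom d m l * p_l d l s / ffact (real N) m))"
    unfolding Dop_def by (simp add: mult_ac)
  also have "\<dots> = (\<Sum>v\<in>simplex d (m-k). p_l d b (\<lambda>i. b i + v i) *
      (multinom d m (\<lambda>i. b i + v i) * p_l d (\<lambda>i. b i + v i) s / ffact (real N) m))"
    by (rule sum_shift[OF b bk True])
  also have "\<dots> = (\<Sum>v\<in>simplex d (m-k). ffact (real m) k * p_l d b s / ffact (real N) m *
      (multinom d (m-k) v * (\<Prod>i<d. ffact (real (s i) - real (b i)) (v i))))"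
  proof (rule sum.cong[OF refl])
    fix v assume v: "v \<in> simplex d (m - k)"
    define FV where "FV = (\<Prod>i<d. fact (v i) :: real)"
    define FBV where "FBV = (\<Prod>i<d. fact (b i + v i) :: real)"
    have pb: "p_l d b (\<lambda>i. b i + v i) = FBV / FV"
      unfolding p_l_def FBV_def FV_def prod_dividef[symmetric]
      by (rule prod.cong[OF refl]) (metis ffact_nat le_add1 add_diff_cancel_left')
    have pbs: "p_l d (\<lambda>i. b i + v i) s = p_l d b s * (\<Prod>i<d. ffact (real (s i) - real (b i)) (v i))"
      unfolding p_l_def prod.distrib[symmetric] by (rule prod.cong[OF refl]) (simp add: ffact_add)
    have fm: "ffact (real m) k = fact m / fact (m - k)" using True by (simp add: ffact_nat)
    have nz: "FV \<noteq> 0" "FBV \<noteq> 0" unfolding FV_def FBV_def by auto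
    show "p_l d b (\<lambda>i. b i + v i) *
      (multinom d m (\<lambda>i. b i + v i) * p_l d (\<lambda>i. b i + v i) s / ffact (real N) m)
      = ffact (real m) k * p_l d b s / ffact (real N) m *
      (multinom d (m-k) v * (\<Prod>i<d. ffact (real (s i) - real (b i)) (v i)))"
      unfolding pb pbs fm multinom_def FV_def[symmetric] FBV_def[symmetric]
      using nz by (simp add: field_simps)
  qed
  also have "\<dots> = ffact (real m) k * p_l d b s / ffact (real N) m * ffact (real N - real k) (m - k)"
  proof -
    have "(\<Sum>i<d. real (s i) - real (b i)) = real N - real k"
      using s bk by (simp add: sum_subtractf simplex_def flip: of_nat_sum)
    then have "(\<Sum>v\<in>simplex d (m-k). multinom d (m-k) v * (\<Prod>i<d. ffact (real (s i) - real (b i)) (v i)))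
        = ffact (real N - real k) (m - k)" using MV_falling[of d "m-k" "\<lambda>i. real (s i) - real (b i)"] by simp
    then show ?thesis by (simp only: sum_distrib_left[symmetric])
  qed
  also have "ffact (real N) m = ffact (real N) k * ffact (real N - real k) (m - k)"
    using ffact_add[of "real N" k "m - k"] True by simp
  also have "ffact (real N - real k) (m - k) \<noteq> 0"
    using kN mN True by (simp add: ffact_nat flip: of_nat_diff)
  then have "ffact (real m) k * p_l d b s / (ffact (real N) k * ffact (real N - real k) (m - k)) * ffact (real N - real k) (m - k)
      = ffact (real m) k / ffact (real N) k * p_l d b s" by simp
  finally show ?thesis .
qed



definition PL :: "nat \<Rightarrow> nat \<Rightarrow> nat \<Rightarrow> ((nat \<Rightarrow> nat) \<Rightarrow> real) set" where
  "PL d N k = {f. \<exists>c. \<forall>r\<in>simplex d N. f r = (\<Sum>l\<in>midx_lt d k. c l * Defs.monom d l r)}"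

lemma PL_le: "polys_le d N k = PL d N (Suc k)"
proof -
  have "midx_le d k = midx_lt d (Suc k)" unfolding midx_le_def midx_lt_def by auto
  then show ?thesis unfolding polys_le_def PL_def by simp
qed

lemma PL_ext: "f \<in> PL d N k \<Longrightarrow> (\<And>r. r \<in> simplex d N \<Longrightarrow> g r = f r) \<Longrightarrow> g \<in> PL d N k"
  unfolding PL_def by auto

lemma PL_zero_fun: "(\<And>r. r \<in> simplex d N \<Longrightarrow> f r = 0) \<Longrightarrow> f \<in> PL d N k"
  unfolding PL_def by (rule CollectI, rule exI[of _ "\<lambda>_. 0"]) auto

lemma PL_0_zero: "f \<in> PL d N 0 \<Longrightarrow> r \<in> simplex d N \<Longrightarrow> f r = 0"
proof -
  have "midx_lt d 0 = {}" unfolding midx_lt_def by auto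
  then show "f \<in> PL d N 0 \<Longrightarrow> r \<in> simplex d N \<Longrightarrow> f r = 0" unfolding PL_def by auto
qed

lemma PL_add:
  assumes "f \<in> PL d N k" "g \<in> PL d N k" shows "(\<lambda>r. f r + g r) \<in> PL d N k"
proof -
  obtain c where c: "\<forall>r\<in>simplex d N. f r = (\<Sum>l\<in>midx_lt d k. c l * Defs.monom d l r)"
    using assms(1) unfolding PL_def by auto
  obtain c' where c': "\<forall>r\<in>simplex d N. g r = (\<Sum>l\<in>midx_lt d k. c' l * Defs.monom d l r)"
    using assms(2) unfolding PL_def by auto
  show ?thesis unfolding PL_def
    by (rule CollectI, rule exI[of _ "\<lambda>l. c l + c' l"]) (simp add: c c' sum.distrib distrib_right)
qed

lemma PL_scale:
  assumes "f \<in> PL d N k" shows "(\<lambda>r. a * f r) \<in> PL d N k"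
proof -
  obtain c where c: "\<forall>r\<in>simplex d N. f r = (\<Sum>l\<in>midx_lt d k. c l * Defs.monom d l r)"
    using assms(1) unfolding PL_def by auto
  show ?thesis unfolding PL_def
    by (rule CollectI, rule exI[of _ "\<lambda>l. a * c l"]) (simp add: c sum_distrib_left mult.assoc)
qed

lemma PL_diff:
  assumes "f \<in> PL d N k" "g \<in> PL d N k" shows "(\<lambda>r. f r - g r) \<in> PL d N k"
  using PL_add[OF assms(1) PL_scale[OF assms(2), of "-1"]] by simp

lemma PL_sum:
  assumes "finite I" "\<And>x. x \<in> I \<Longrightarrow> f x \<in> PL d N k"
  shows "(\<lambda>r. \<Sum>x\<in>I. f x r) \<in> PL d N k"
  using assms
proof (induction I rule: finite_induct)
  case empty then show ?case by (simp add: PL_zero_fun)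
next
  case (insert x F)
  then show ?case using PL_add[of "f x" d N k "\<lambda>r. \<Sum>x\<in>F. f x r"] by simp
qed

lemma PL_mono:
  assumes "f \<in> PL d N k" "k \<le> k'" shows "f \<in> PL d N k'"
proof -
  obtain c where c: "\<forall>r\<in>simplex d N. f r = (\<Sum>l\<in>midx_lt d k. c l * Defs.monom d l r)"
    using assms(1) unfolding PL_def by auto
  have sub: "midx_lt d k \<subseteq> midx_lt d k'" using assms(2) unfolding midx_lt_def by auto
  show ?thesis unfolding PL_def
  proof (rule CollectI, rule exI[of _ "\<lambda>l. if l \<in> midx_lt d k then c l else 0"], rule ballI)
    fix r assume r: "r \<in> simplex d N"
    have "(\<Sum>l\<in>midx_lt d k'. (if l \<in> midx_lt d k then c l else 0) * Defs.monom d l r)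
        = (\<Sum>l\<in>midx_lt d k. (if l \<in> midx_lt d k then c l else 0) * Defs.monom d l r)"
      by (rule sum.mono_neutral_right[OF finite_midx_lt sub]) auto
    then show "f r = (\<Sum>l\<in>midx_lt d k'. (if l \<in> midx_lt d k then c l else 0) * Defs.monom d l r)"
      using c r by simp
  qed
qed

lemma PL_monom:
  assumes "\<forall>i. d \<le> i \<longrightarrow> l i = 0" "(\<Sum>i<d. l i) < k" shows "Defs.monom d l \<in> PL d N k"
  unfolding PL_def
proof (rule CollectI, rule exI[of _ "\<lambda>l'. if l' = l then 1 else 0"], rule ballI)
  fix r
  have "l \<in> midx_lt d k" using assms unfolding midx_lt_def by auto
  then show "Defs.monom d l r = (\<Sum>l'\<in>midx_lt d k. (if l' = l then 1 else 0) * Defs.monom d l' r)"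
  proof -
    have "(\<Sum>l'\<in>midx_lt d k. (if l' = l then 1 else 0) * Defs.monom d l' r)
        = (\<Sum>l'\<in>midx_lt d k. if l' = l then Defs.monom d l' r else 0)"
      by (rule sum.cong) auto
    also have "\<dots> = Defs.monom d l r" using \<open>l \<in> midx_lt d k\<close> by (simp add: finite_midx_lt)
    finally show ?thesis by simp
  qed
qed

lemma monom_add: "Defs.monom d (\<lambda>i. l i + l' i) r = Defs.monom d l r * Defs.monom d l' r"
  unfolding Defs.monom_def by (simp add: power_add prod.distrib)

lemma PL_mult:
  assumes "f \<in> PL d N a" "g \<in> PL d N (Suc b)" shows "(\<lambda>r. f r * g r) \<in> PL d N (a + b)"
proof -
  obtain c where c: "\<forall>r\<in>simplex d N. f r = (\<Sum>l\<in>midx_lt d a. c l * Defs.monom d l r)"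
    using assms(1) unfolding PL_def by auto
  obtain c' where c': "\<forall>r\<in>simplex d N. g r = (\<Sum>l\<in>midx_lt d (Suc b). c' l * Defs.monom d l r)"
    using assms(2) unfolding PL_def by auto
  let ?S = "midx_lt d a \<times> midx_lt d (Suc b)"
  let ?g = "\<lambda>p::(nat\<Rightarrow>nat)\<times>(nat\<Rightarrow>nat). (\<lambda>i. fst p i + snd p i)"
  define C where "C u = (\<Sum>p\<in>{p\<in>?S. ?g p = u}. c (fst p) * c' (snd p))" for u
  have fin: "finite ?S" by (simp add: finite_midx_lt)
  have img: "?g ` ?S \<subseteq> midx_lt d (a + b)"
  proof
    fix x assume "x \<in> ?g ` ?S"
    then obtain l l' where l: "l \<in> midx_lt d a" and l': "l' \<in> midx_lt d (Suc b)" and x: "x = (\<lambda>i. l i + l' i)"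
      by auto
    then show "x \<in> midx_lt d (a + b)" unfolding midx_lt_def by (auto simp: sum.distrib)
  qed
  show ?thesis unfolding PL_def
  proof (rule CollectI, rule exI[of _ C], rule ballI)
    fix r assume r: "r \<in> simplex d N"
    have "f r * g r = (\<Sum>p\<in>?S. c (fst p) * c' (snd p) * Defs.monom d (?g p) r)"
      unfolding c[rule_format, OF r] c'[rule_format, OF r] sum_product sum.cartesian_product
      by (rule sum.cong[OF refl]) (simp add: monom_add split_beta mult_ac)
    also have "\<dots> = (\<Sum>u\<in>midx_lt d (a + b). \<Sum>p\<in>{p\<in>?S. ?g p = u}. c (fst p) * c' (snd p) * Defs.monom d (?g p) r)"
      by (rule sum.group[OF fin finite_midx_lt img, symmetric])
    also have "\<dots> = (\<Sum>u\<in>midx_lt d (a + b). C u * Defs.monom d u r)"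
      unfolding C_def sum_distrib_right
      by (rule sum.cong[OF refl], rule sum.cong[OF refl]) auto
    finally show "f r * g r = (\<Sum>u\<in>midx_lt d (a + b). C u * Defs.monom d u r)" .
  qed
qed



lemma poly_as_sum:
  fixes Q :: "real poly"
  assumes "\<forall>t\<ge>e. coeff Q t = 0"
  shows "poly Q x = (\<Sum>t<e. coeff Q t * x ^ t)"
proof (cases "Q = 0")
  case True then show ?thesis by simp
next
  case False
  then have "coeff Q (degree Q) \<noteq> 0" by simp
  then have de: "degree Q < e" using assms by (meson not_le)
  have "poly Q x = (\<Sum>t\<le>degree Q. coeff Q t * x ^ t)" by (rule poly_altdef)
  also have "\<dots> = (\<Sum>t<e. coeff Q t * x ^ t)"
    by (rule sum.mono_neutral_left) (use de in \<open>auto simp: coeff_eq_0\<close>)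
  finally show ?thesis .
qed

lemma PL_coord_pow:
  assumes "i < d" "t < e" shows "(\<lambda>r. real (r i) ^ t) \<in> PL d N e"
proof -
  let ?l = "\<lambda>j. if j = i then t else 0"
  have mem: "Defs.monom d ?l \<in> PL d N e"
    by (rule PL_monom) (use assms in \<open>auto simp: if_distrib cong: if_cong\<close>)
  have eq: "Defs.monom d ?l r = real (r i) ^ t" for r
  proof -
    have "Defs.monom d ?l r = (\<Prod>j<d. if j = i then real (r i) ^ t else 1)"
      unfolding Defs.monom_def by (rule prod.cong) auto
    then show ?thesis using assms by simp
  qed
  show ?thesis by (rule PL_ext[OF mem]) (simp add: eq)
qed

lemma PL_coord_poly:
  assumes "i < d" "\<forall>t\<ge>e. coeff Q t = 0" shows "(\<lambda>r. poly Q (real (r i))) \<in> PL d N e"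
proof -
  have "(\<lambda>r. \<Sum>t<e. coeff Q t * real (r i) ^ t) \<in> PL d N e"
    by (rule PL_sum) (auto intro!: PL_scale PL_coord_pow assms)
  then show ?thesis by (rule PL_ext) (simp add: poly_as_sum[OF assms(2)])
qed

lemma PL_prod_poly:
  assumes "finite I" "I \<subseteq> {..<d}"
    and Q: "\<And>i. i \<in> I \<Longrightarrow> coeff (Q i) (e i) = 1 \<and> (\<forall>t>e i. coeff (Q i) t = 0)"
  shows "(\<lambda>r. \<Prod>i\<in>I. poly (Q i) (real (r i))) \<in> PL d N (Suc (\<Sum>i\<in>I. e i)) \<and>
         (\<lambda>r. (\<Prod>i\<in>I. poly (Q i) (real (r i))) - (\<Prod>i\<in>I. real (r i) ^ e i)) \<in> PL d N (\<Sum>i\<in>I. e i)"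
  using assms
proof (induction I rule: finite_induct)
  case empty
  have mem: "Defs.monom d (\<lambda>_. 0) \<in> PL d N (Suc 0)" by (rule PL_monom) auto
  have eq: "Defs.monom d (\<lambda>_. 0) r = 1" for r unfolding Defs.monom_def by simp
  have "(\<lambda>r. 1) \<in> PL d N (Suc 0)" by (rule PL_ext[OF mem]) (simp add: eq)
  then show ?case by (auto intro: PL_zero_fun)
next
  case (insert i I)
  let ?F = "\<lambda>r. \<Prod>i\<in>I. poly (Q i) (real (r i))"
  let ?M = "\<lambda>r. \<Prod>i\<in>I. real (r i) ^ e i"
  let ?E = "\<Sum>i\<in>I. e i"
  have IH: "?F \<in> PL d N (Suc ?E)" "(\<lambda>r. ?F r - ?M r) \<in> PL d N ?E"
    using insert by auto
  have id: "i < d" using insert by auto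
  have Qi: "coeff (Q i) (e i) = 1" "\<forall>t>e i. coeff (Q i) t = 0" using insert by auto
  have p1: "(\<lambda>r. poly (Q i) (real (r i))) \<in> PL d N (Suc (e i))"
    by (rule PL_coord_poly[OF id]) (use Qi in auto)
  have p2: "(\<lambda>r. poly (Q i - Polynomial.monom 1 (e i)) (real (r i))) \<in> PL d N (e i)"
    by (rule PL_coord_poly[OF id]) (use Qi in \<open>auto simp: coeff_monom\<close>)
  have p3: "(\<lambda>r. real (r i) ^ e i) \<in> PL d N (Suc (e i))"
    by (rule PL_coord_pow[OF id]) simp
  have s: "(\<Sum>i\<in>insert i I. e i) = e i + ?E" using insert by simp
  have A: "(\<lambda>r. poly (Q i) (real (r i)) * ?F r) \<in> PL d N (Suc (e i) + ?E)"
    by (rule PL_mult[OF p1 IH(1)])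
  have B1: "(\<lambda>r. poly (Q i - Polynomial.monom 1 (e i)) (real (r i)) * ?F r) \<in> PL d N (e i + ?E)"
    by (rule PL_mult[OF p2 IH(1)])
  have B2: "(\<lambda>r. (?F r - ?M r) * real (r i) ^ e i) \<in> PL d N (e i + ?E)"
    using PL_mult[OF IH(2) p3] by (simp add: add.commute)
  have B: "(\<lambda>r. poly (Q i - Polynomial.monom 1 (e i)) (real (r i)) * ?F r + (?F r - ?M r) * real (r i) ^ e i)
      \<in> PL d N (e i + ?E)"
    using PL_add[OF B1 B2] by simp
  show ?case
  proof
    show "(\<lambda>r. \<Prod>i\<in>insert i I. poly (Q i) (real (r i))) \<in> PL d N (Suc (\<Sum>i\<in>insert i I. e i))"
      using A insert by (simp add: s)
    show "(\<lambda>r. (\<Prod>i\<in>insert i I. poly (Q i) (real (r i))) - (\<Prod>i\<in>insert i I. real (r i) ^ e i))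
        \<in> PL d N (\<Sum>i\<in>insert i I. e i)"
      unfolding s by (rule PL_ext[OF B]) (simp add: insert poly_monom algebra_simps)
  qed
qed

definition Qf :: "nat \<Rightarrow> real poly" where "Qf n = (\<Prod>t<n. [:- real t, 1:])"
definition Qp :: "real \<Rightarrow> nat \<Rightarrow> real poly" where "Qp a n = (\<Prod>t<n. [:a + real t, 1:])"

lemma monic_lin_prod:
  fixes c :: "nat \<Rightarrow> real"
  shows "coeff (\<Prod>t<n. [:c t, 1:]) n = 1 \<and> (\<forall>t'>n. coeff (\<Prod>t<n. [:c t, 1:]) t' = 0)"
proof -
  have nz: "\<forall>t\<in>{..<n}. [:c t, 1:] \<noteq> 0" by simp
  have deg: "degree (\<Prod>t<n. [:c t, 1:]) = n"
    using degree_prod_eq_sum_degree[OF nz] by simp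
  have lc: "lead_coeff (\<Prod>t<n. [:c t, 1:]) = 1" by (simp add: lead_coeff_prod)
  show ?thesis using deg lc by (auto intro: coeff_eq_0)
qed

lemma poly_Qf: "poly (Qf n) x = ffact x n"
  unfolding Qf_def ffact_def poly_prod by simp

lemma poly_Qp: "poly (Qp a n) x = pochhammer (a + x) n"
  unfolding Qp_def pochhammer_prod poly_prod atLeast0LessThan by (simp add: algebra_simps)

lemma p_l_PL:
  shows "p_l d b \<in> PL d N (Suc (\<Sum>i<d. b i))"
    and "(\<lambda>r. p_l d b r - Defs.monom d b r) \<in> PL d N (\<Sum>i<d. b i)"
proof -
  have "(\<lambda>r. \<Prod>i<d. poly (Qf (b i)) (real (r i))) \<in> PL d N (Suc (\<Sum>i<d. b i)) \<and>
     (\<lambda>r. (\<Prod>i<d. poly (Qf (b i)) (real (r i))) - (\<Prod>i<d. real (r i) ^ b i)) \<in> PL d N (\<Sum>i<d. b i)"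
    by (rule PL_prod_poly) (auto simp: Qf_def monic_lin_prod[where c="\<lambda>t. - real t", simplified])
  then show "p_l d b \<in> PL d N (Suc (\<Sum>i<d. b i))"
    and "(\<lambda>r. p_l d b r - Defs.monom d b r) \<in> PL d N (\<Sum>i<d. b i)"
    unfolding p_l_def Defs.monom_def poly_Qf by auto
qed

lemma q_j_PL:
  shows "q_j d \<alpha> b \<in> PL d N (Suc (\<Sum>i<d. b i))"
    and "(\<lambda>r. q_j d \<alpha> b r - Defs.monom d b r) \<in> PL d N (\<Sum>i<d. b i)"
proof -
  have "(\<lambda>r. \<Prod>i<d. poly (Qp (\<alpha> i) (b i)) (real (r i))) \<in> PL d N (Suc (\<Sum>i<d. b i)) \<and>
     (\<lambda>r. (\<Prod>i<d. poly (Qp (\<alpha> i) (b i)) (real (r i))) - (\<Prod>i<d. real (r i) ^ b i)) \<in> PL d N (\<Sum>i<d. b i)"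
    by (rule PL_prod_poly) (auto simp: Qp_def monic_lin_prod)
  then show "q_j d \<alpha> b \<in> PL d N (Suc (\<Sum>i<d. b i))"
    and "(\<lambda>r. q_j d \<alpha> b r - Defs.monom d b r) \<in> PL d N (\<Sum>i<d. b i)"
    unfolding q_j_def Defs.monom_def poly_Qp by auto
qed



lemma Dop_cong: "(\<And>l. l \<in> simplex d m \<Longrightarrow> g l = g' l) \<Longrightarrow> Dop d N m g s = Dop d N m g' s"
  unfolding Dop_def by (rule sum.cong) auto

lemma Dop_scale: "Dop d N m (\<lambda>l. a * g l) s = a * Dop d N m g s"
  unfolding Dop_def by (simp add: sum_distrib_left mult_ac)

lemma Dop_diff: "Dop d N m (\<lambda>l. g l - g' l) s = Dop d N m g s - Dop d N m g' s"
  unfolding Dop_def by (simp add: sum_subtractf right_diff_distrib)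

lemma Dop_sum: "finite I \<Longrightarrow> Dop d N m (\<lambda>l. \<Sum>b\<in>I. G b l) s = (\<Sum>b\<in>I. Dop d N m (G b) s)"
  unfolding Dop_def by (simp add: sum_distrib_left sum.swap[of _ I])

lemma Dop_PL:
  assumes mN: "m \<le> N"
  shows "g \<in> PL d m k \<Longrightarrow> Dop d N m g \<in> PL d N k"
proof (induction k arbitrary: g rule: less_induct)
  case (less k)
  obtain c where c: "\<forall>l\<in>simplex d m. g l = (\<Sum>b\<in>midx_lt d k. c b * Defs.monom d b l)"
    using less.prems unfolding PL_def by auto
  have eq: "Dop d N m g s = (\<Sum>b\<in>midx_lt d k. c b * Dop d N m (Defs.monom d b) s)" for s
  proof -
    have "Dop d N m g s = Dop d N m (\<lambda>l. \<Sum>b\<in>midx_lt d k. c b * Defs.monom d b l) s"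
      using c by (intro Dop_cong) auto
    also have "\<dots> = (\<Sum>b\<in>midx_lt d k. Dop d N m (\<lambda>l. c b * Defs.monom d b l) s)"
      by (rule Dop_sum[OF finite_midx_lt])
    finally show ?thesis by (simp add: Dop_scale)
  qed
  have "(\<lambda>s. \<Sum>b\<in>midx_lt d k. c b * Dop d N m (Defs.monom d b) s) \<in> PL d N k"
  proof (rule PL_sum[OF finite_midx_lt], rule PL_scale)
    fix b assume b: "b \<in> midx_lt d k"
    define j where "j = (\<Sum>i<d. b i)"
    have jk: "j < k" and bs: "\<forall>i. d \<le> i \<longrightarrow> b i = 0" using b unfolding midx_lt_def j_def by auto
    have r1: "Dop d N m (\<lambda>l. p_l d b l - Defs.monom d b l) \<in> PL d N j"
      using less.IH[OF jk] p_l_PL(2)[of d b m] unfolding j_def by blast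
    have r2: "(\<lambda>s. ffact (real m) j / ffact (real N) j * p_l d b s) \<in> PL d N k"
      using PL_mono[OF PL_scale[OF p_l_PL(1)[of d b N]], of k "ffact (real m) j / ffact (real N) j"] jk unfolding j_def by simp
    have "(\<lambda>s. ffact (real m) j / ffact (real N) j * p_l d b s - Dop d N m (\<lambda>l. p_l d b l - Defs.monom d b l) s)
        \<in> PL d N k"
      using PL_diff[OF r2 PL_mono[OF r1]] jk by simp
    then show "Dop d N m (Defs.monom d b) \<in> PL d N k"
    proof (rule PL_ext)
      fix s assume s: "s \<in> simplex d N"
      have "Dop d N m (Defs.monom d b) s = Dop d N m (p_l d b) s - Dop d N m (\<lambda>l. p_l d b l - Defs.monom d b l) s"
        by (simp add: Dop_diff)
      then show "Dop d N m (Defs.monom d b) s = ffact (real m) j / ffact (real N) j * p_l d b s -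
          Dop d N m (\<lambda>l. p_l d b l - Defs.monom d b l) s"
        using D_p[OF s bs j_def[symmetric] mN] by simp
    qed
  qed
  then show ?case by (rule PL_ext) (simp add: eq)
qed

definition lam :: "real \<Rightarrow> nat \<Rightarrow> nat \<Rightarrow> nat \<Rightarrow> real" where
  "lam \<theta> N m k = pochhammer (\<theta> + real N) k / pochhammer (\<theta> + real m) k * (ffact (real m) k / ffact (real N) k)"

lemma A_tri:
  assumes pos: "\<And>i. i < d \<Longrightarrow> \<alpha> i > 0" and apos: "abs_alpha d \<alpha> > 0" and mN: "m \<le> N"
    and js: "\<forall>i. d \<le> i \<longrightarrow> j i = 0" and jk: "(\<Sum>i<d. j i) = k"
  shows "(\<lambda>s. Aop d \<alpha> N m (q_j d \<alpha> j) s - lam (abs_alpha d \<alpha>) N m k * q_j d \<alpha> j s) \<in> PL d N k"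
proof -
  define cU where "cU = pochhammer (abs_alpha d \<alpha> + real N) k / pochhammer (abs_alpha d \<alpha> + real m) k"
  define cD where "cD = ffact (real m) k / ffact (real N) k"
  have qp: "(\<lambda>l. q_j d \<alpha> j l - p_l d j l) \<in> PL d M k" for M
    using PL_diff[OF q_j_PL(2)[of d \<alpha> j M] p_l_PL(2)[of d j M]] jk by simp
  have R: "Dop d N m (\<lambda>l. q_j d \<alpha> j l - p_l d j l) \<in> PL d N k"
    by (rule Dop_PL[OF mN qp])
  have "(\<lambda>s. cU * Dop d N m (\<lambda>l. q_j d \<alpha> j l - p_l d j l) s - cU * cD * (q_j d \<alpha> j s - p_l d j s)) \<in> PL d N k"
    by (intro PL_diff PL_scale R qp)
  then show ?thesis
  proof (rule PL_ext)
    fix s assume s: "s \<in> simplex d N"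
    have "Aop d \<alpha> N m (q_j d \<alpha> j) s = Dop d N m (Uop d \<alpha> N m (q_j d \<alpha> j)) s"
      by (rule A_eq[OF pos apos mN])
    also have "\<dots> = Dop d N m (\<lambda>l. cU * q_j d \<alpha> j l) s"
      by (rule Dop_cong) (simp add: U_q[OF pos apos mN _ jk] cU_def)
    also have "\<dots> = cU * (Dop d N m (p_l d j) s + Dop d N m (\<lambda>l. q_j d \<alpha> j l - p_l d j l) s)"
      by (simp add: Dop_scale Dop_diff)
    also have "Dop d N m (p_l d j) s = cD * p_l d j s"
      unfolding cD_def by (rule D_p[OF s js jk mN])
    finally show "Aop d \<alpha> N m (q_j d \<alpha> j) s - lam (abs_alpha d \<alpha>) N m k * q_j d \<alpha> j s
        = cU * Dop d N m (\<lambda>l. q_j d \<alpha> j l - p_l d j l) s - cU * cD * (q_j d \<alpha> j s - p_l d j s)"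
      unfolding lam_def cU_def[symmetric] cD_def[symmetric] by (simp add: algebra_simps)
  qed
qed

lemma chiH_PL: "(\<lambda>r. chiH d \<alpha> N m r s) \<in> PL d N (Suc m)"
proof -
  have "(\<lambda>r. \<Sum>l\<in>simplex d m. (1 / DM d \<alpha> l m) * (multinom d m l * p_l d l s / ffact (real N) m)
          * (multinom d m l / ffact (real N) m) * p_l d l r) \<in> PL d N (Suc m)"
  proof (rule PL_sum[OF finite_simplex], rule PL_scale)
    fix l assume "l \<in> simplex d m"
    then have "(\<Sum>i<d. l i) = m" by (simp add: simplex_def)
    then show "p_l d l \<in> PL d N (Suc m)" using p_l_PL(1)[of d l N] by simp
  qed
  then show ?thesis by (rule PL_ext) (simp add: chiH_def mult_ac)
qed



lemma alt_pascal:
  fixes f :: "nat \<Rightarrow> real"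
  shows "(\<Sum>i\<le>Suc M. (-1)^i * real (Suc M choose i) * f i)
       = - (\<Sum>i\<le>M. (-1)^i * real (M choose i) * (f (Suc i) - f i))"
proof -
  let ?A = "\<Sum>i\<le>M. (-1)^i * real (M choose i) * f i"
  let ?A' = "\<Sum>i\<le>M. (-1)^i * real (M choose i) * f (Suc i)"
  let ?B = "\<Sum>i\<le>M. (-1)^i * real (M choose Suc i) * f (Suc i)"
  have L: "(\<Sum>i\<le>Suc M. (-1)^i * real (Suc M choose i) * f i) = f 0 - ?A' - ?B"
    by (subst sum.atMost_Suc_shift) (simp add: algebra_simps sum.distrib sum_negf sum_subtractf)
  have "?A = (\<Sum>i\<le>Suc M. (-1)^i * real (M choose i) * f i)" by simp
  also have "\<dots> = f 0 - ?B"
    by (subst sum.atMost_Suc_shift) (simp add: sum_negf)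
  finally have B: "?B = f 0 - ?A" by simp
  show ?thesis unfolding L B by (simp add: algebra_simps sum_subtractf)
qed

lemma T_lemma:
  "L < M \<Longrightarrow> (\<Sum>i\<le>M. (-1)^i * real (M choose i) * pochhammer (c + real i) L) = 0"
proof (induction M arbitrary: L c)
  case 0 then show ?case by simp
next
  case (Suc M)
  have "(\<Sum>i\<le>Suc M. (-1)^i * real (Suc M choose i) * pochhammer (c + real i) L)
      = - (\<Sum>i\<le>M. (-1)^i * real (M choose i) * (pochhammer (c + real (Suc i)) L - pochhammer (c + real i) L))"
    by (rule alt_pascal)
  also have "\<dots> = 0"
  proof (cases L)
    case 0 then show ?thesis by simp
  next
    case (Suc L')
    have d: "pochhammer (c + real (Suc i)) L - pochhammer (c + real i) L = real L * pochhammer ((c + 1) + real i) L'" for i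
    proof -
      have "pochhammer (c + real i) L = (c + real i) * pochhammer (c + real i + 1) L'"
        unfolding Suc by (rule pochhammer_rec)
      moreover have "pochhammer (c + real (Suc i)) L = pochhammer (c + real i + 1) L' * (c + real i + 1 + real L')"
        unfolding Suc by (simp add: pochhammer_rec' add_ac)
      ultimately show ?thesis unfolding Suc by (simp add: algebra_simps)
    qed
    have "(\<Sum>i\<le>M. (-1)^i * real (M choose i) * pochhammer ((c + 1) + real i) L') = 0"
      using Suc.IH[of L' "c+1"] Suc.prems \<open>L = Suc L'\<close> by simp
    then show ?thesis unfolding d by (simp add: sum_distrib_left[symmetric] mult_ac)
  qed
  finally show ?case .
qed

lemma a_identity:
  assumes th: "\<theta> > 0" and kn: "k \<le> n"
  shows "(\<Sum>m\<le>n. a_coef \<theta> n m * ffact (real m) k / pochhammer (\<theta> + real m) k) = (if k = n then 1 else 0)"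
proof -
  have pp: "pochhammer (\<theta> + real m) j > 0" for m j using th by (intro pochhammer_pos) simp
  have z: "\<And>m. m < k \<Longrightarrow> ffact (real m) k = 0" by (rule ffact_nat_zero)
  show ?thesis
  proof (cases "k = n")
    case True
    have "(\<Sum>m\<le>n. a_coef \<theta> n m * ffact (real m) k / pochhammer (\<theta> + real m) k)
        = a_coef \<theta> n n * ffact (real n) n / pochhammer (\<theta> + real n) n"
    proof -
      have "(\<Sum>m\<le>n. a_coef \<theta> n m * ffact (real m) k / pochhammer (\<theta> + real m) k)
          = (\<Sum>m\<in>{n}. a_coef \<theta> n m * ffact (real m) k / pochhammer (\<theta> + real m) k)"
        by (rule sum.mono_neutral_right) (use True z in auto)
      then show ?thesis using True by simp
    qed
    also have "\<dots> = 1"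
    proof (cases "n = 0")
      case True then show ?thesis by (simp add: a_coef_def ffact_def)
    next
      case False
      have pn: "pochhammer (\<theta> + real n) n = pochhammer (\<theta> + real n) (n - 1) * (\<theta> + 2 * real n - 1)"
      proof -
        have "n = Suc (n - 1)" using False by simp
        then have "pochhammer (\<theta> + real n) n = pochhammer (\<theta> + real n) (n - 1) * (\<theta> + real n + real (n - 1))"
          by (metis pochhammer_Suc)
        then show ?thesis using False by (simp add: of_nat_diff)
      qed
      have ac: "a_coef \<theta> n n = (\<theta> + 2 * real n - 1) * pochhammer (\<theta> + real n) (n - 1) / fact n"
        using False by (simp add: a_coef_def)
      have ff: "ffact (real n) n = fact n" by (simp add: ffact_nat)
      have X: "\<theta> + 2 * real n - 1 > 0" using False th by simp
      have P: "pochhammer (\<theta> + real n) (n - 1) > 0" using pp .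
      have gen: "\<And>x p. x \<noteq> 0 \<Longrightarrow> p \<noteq> 0 \<Longrightarrow> x * p / fact n * fact n / (p * x) = (1::real)"
        by simp
      show ?thesis unfolding pn ac ff using gen X P by simp
    qed
    finally show ?thesis using True by simp
  next
    case False
    then have kn': "k < n" using kn by simp
    define M where "M = n - k"
    have M1: "M \<ge> 1" using kn' unfolding M_def by simp
    define c where "c = \<theta> + 2 * real k"
    define F where "F m = a_coef \<theta> n m * ffact (real m) k / pochhammer (\<theta> + real m) k" for m
    have "(\<Sum>m\<le>n. F m) = (\<Sum>m\<in>(\<lambda>i. k + i) ` {..M}. F m)"
    proof (rule sum.mono_neutral_right)
      show "(\<lambda>i. k + i) ` {..M} \<subseteq> {..n}" unfolding M_def using kn by auto
      show "\<forall>i\<in>{..n} - (\<lambda>i. k + i) ` {..M}. F i = 0"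
      proof
        fix i assume A: "i \<in> {..n} - (\<lambda>i. k + i) ` {..M}"
        have "i < k"
        proof (rule ccontr)
          assume "\<not> i < k"
          then have "i = k + (i - k)" "i - k \<in> {..M}" using A unfolding M_def by auto
          then have "i \<in> (\<lambda>i. k + i) ` {..M}" by (metis imageI)
          then show False using A by blast
        qed
        then show "F i = 0" by (simp add: F_def z)
      qed
    qed simp
    also have "\<dots> = (\<Sum>i\<le>M. F (k + i))" by (subst sum.reindex) (auto simp: inj_on_def)
    also have "\<dots> = (\<Sum>i\<le>M. (\<theta> + 2 * real n - 1) * (-1)^M / fact M *
                 ((-1)^i * real (M choose i) * pochhammer (c + real i) (M - 1)))"
    proof (rule sum.cong[OF refl])
      fix i assume i: "i \<in> {..M}"
      have n0: "n \<noteq> 0" using kn' by simp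
      have nm: "n - (k + i) = M - i" unfolding M_def by simp
      have sgn: "(-1::real)^(M - i) = (-1)^M * (-1)^i"
      proof -
        have e1: "(-1::real)^M = (-1)^(M-i) * (-1)^i" using i by (simp flip: power_add)
        have e2: "(-1::real)^i * (-1)^i = 1" by (simp flip: power_mult_distrib)
        show ?thesis unfolding e1 mult.assoc e2 by simp
      qed
      have ff: "ffact (real (k + i)) k = fact (k + i) / fact i"
        using ffact_nat[of k "k + i"] by simp
      have pc: "pochhammer (\<theta> + real (k + i)) (n - 1) = pochhammer (\<theta> + real (k + i)) k * pochhammer (c + real i) (M - 1)"
      proof -
        have "n - 1 = k + (M - 1)" using M1 unfolding M_def by simp
        then show ?thesis unfolding c_def by (simp add: pochhammer_product' add_ac)
      qed
      have ch: "real (M choose i) = fact M / (fact i * fact (M - i))"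
        using i by (simp add: binomial_fact)
      have p0: "pochhammer (\<theta> + real (k + i)) k > 0" using pp .
      have ac: "a_coef \<theta> n (k + i) = (\<theta> + 2 * real n - 1) * (-1)^(n - (k + i)) *
          pochhammer (\<theta> + real (k + i)) (n - 1) / (fact (k + i) * fact (n - (k + i)))"
        using n0 by (simp add: a_coef_def)
      have aux: "\<And>X S s Pk Q Fki FMi Fi FM::real. Pk \<noteq> 0 \<Longrightarrow> Fki \<noteq> 0 \<Longrightarrow> FMi \<noteq> 0 \<Longrightarrow> Fi \<noteq> 0 \<Longrightarrow> FM \<noteq> 0 \<Longrightarrow>
          X * (S * s) * (Pk * Q) / (Fki * FMi) * (Fki / Fi) / Pk = X * S / FM * (s * (FM / (Fi * FMi)) * Q)"
        by (simp add: field_simps)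
      have "F (k + i) = (\<theta> + 2 * real n - 1) * ((-1)^M * (-1)^i) *
          (pochhammer (\<theta> + real (k + i)) k * pochhammer (c + real i) (M - 1)) / (fact (k + i) * fact (M - i))
          * (fact (k + i) / fact i) / pochhammer (\<theta> + real (k + i)) k"
        unfolding F_def ac nm sgn pc ff by simp
      also have "\<dots> = (\<theta> + 2 * real n - 1) * (-1)^M / fact M *
                 ((-1)^i * (fact M / (fact i * fact (M - i))) * pochhammer (c + real i) (M - 1))"
        by (rule aux) (use p0 in auto)
      finally show "F (k + i) = (\<theta> + 2 * real n - 1) * (-1)^M / fact M *
                 ((-1)^i * real (M choose i) * pochhammer (c + real i) (M - 1))"
        unfolding ch .
    qed
    also have "\<dots> = (\<theta> + 2 * real n - 1) * (-1)^M / fact M *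
        (\<Sum>i\<le>M. (-1)^i * real (M choose i) * pochhammer (c + real i) (M - 1))"
      by (simp add: sum_distrib_left)
    also have "\<dots> = 0" using T_lemma[of "M - 1" M c] M1 by simp
    finally show ?thesis using False unfolding F_def by simp
  qed
qed



context
  fixes d N n :: nat and \<alpha> :: "nat \<Rightarrow> real"
  assumes pos: "\<And>i. i < d \<Longrightarrow> \<alpha> i > 0" and apos: "abs_alpha d \<alpha> > 0" and nN: "n \<le> N"
begin

definition GG :: "(nat \<Rightarrow> nat) \<Rightarrow> (nat \<Rightarrow> nat) \<Rightarrow> real" where
  "GG r s = ffact (real N) n / pochhammer (abs_alpha d \<alpha> + real N) n
         * (\<Sum>m\<le>n. a_coef (abs_alpha d \<alpha>) n m * chiH d \<alpha> N m r s)"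

definition Bop :: "((nat \<Rightarrow> nat) \<Rightarrow> real) \<Rightarrow> (nat \<Rightarrow> nat) \<Rightarrow> real" where
  "Bop f s = (\<Sum>r\<in>simplex d N. DM d \<alpha> r N * GG r s * f r)"

definition Cm :: "nat \<Rightarrow> real" where
  "Cm m = ffact (real N) n / pochhammer (abs_alpha d \<alpha> + real N) n * a_coef (abs_alpha d \<alpha>) n m"

definition mu :: "nat \<Rightarrow> real" where
  "mu k = (\<Sum>m\<le>n. Cm m * lam (abs_alpha d \<alpha>) N m k)"

lemma B_Aop: "Bop f s = (\<Sum>m\<le>n. Cm m * Aop d \<alpha> N m f s)"
proof -
  have "Bop f s = (\<Sum>r\<in>simplex d N. \<Sum>m\<le>n. Cm m * (DM d \<alpha> r N * chiH d \<alpha> N m r s * f r))"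
    unfolding Bop_def GG_def Cm_def
    by (rule sum.cong[OF refl]) (simp add: sum_distrib_left sum_distrib_right mult_ac)
  also have "\<dots> = (\<Sum>m\<le>n. \<Sum>r\<in>simplex d N. Cm m * (DM d \<alpha> r N * chiH d \<alpha> N m r s * f r))"
    by (rule sum.swap)
  also have "\<dots> = (\<Sum>m\<le>n. Cm m * Aop d \<alpha> N m f s)"
    unfolding Aop_def by (simp add: sum_distrib_left)
  finally show ?thesis .
qed

lemma B_cong: "(\<And>r. r \<in> simplex d N \<Longrightarrow> f r = g r) \<Longrightarrow> Bop f s = Bop g s"
  unfolding Bop_def by (rule sum.cong) auto

lemma B_diff: "Bop (\<lambda>r. f r - g r) s = Bop f s - Bop g s"
  unfolding Bop_def by (simp add: sum_subtractf right_diff_distrib)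

lemma B_scale: "Bop (\<lambda>r. a * f r) s = a * Bop f s"
  unfolding Bop_def by (simp add: sum_distrib_left mult_ac)

lemma B_sum: "finite I \<Longrightarrow> Bop (\<lambda>r. \<Sum>b\<in>I. F b r) s = (\<Sum>b\<in>I. Bop (F b) s)"
  unfolding Bop_def sum_distrib_left by (rule sum.swap)

lemma GG_sym: "GG r s = GG s r"
  unfolding GG_def chiH_def by (simp add: mult_ac)

lemma B_selfadj:
  "(\<Sum>s\<in>simplex d N. DM d \<alpha> s N * Bop f s * g s) = (\<Sum>r\<in>simplex d N. DM d \<alpha> r N * f r * Bop g r)"
proof -
  have "(\<Sum>s\<in>simplex d N. DM d \<alpha> s N * Bop f s * g s)
      = (\<Sum>s\<in>simplex d N. \<Sum>r\<in>simplex d N. DM d \<alpha> s N * DM d \<alpha> r N * GG r s * f r * g s)"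
    unfolding Bop_def by (rule sum.cong[OF refl]) (simp add: sum_distrib_left sum_distrib_right mult_ac)
  also have "\<dots> = (\<Sum>r\<in>simplex d N. \<Sum>s\<in>simplex d N. DM d \<alpha> s N * DM d \<alpha> r N * GG r s * f r * g s)"
    by (rule sum.swap)
  also have "\<dots> = (\<Sum>r\<in>simplex d N. DM d \<alpha> r N * f r * Bop g r)"
    unfolding Bop_def by (rule sum.cong[OF refl]) (simp add: sum_distrib_left GG_sym mult_ac)
  finally show ?thesis .
qed

lemma mu_val: "k \<le> n \<Longrightarrow> mu k = (if k = n then 1 else 0)"
proof -
  assume kn: "k \<le> n"
  let ?t = "abs_alpha d \<alpha>"
  have "mu k = ffact (real N) n / pochhammer (?t + real N) n * (pochhammer (?t + real N) k / ffact (real N) k)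
     * (\<Sum>m\<le>n. a_coef ?t n m * ffact (real m) k / pochhammer (?t + real m) k)"
    unfolding mu_def sum_distrib_left
    by (rule sum.cong[OF refl]) (simp add: Cm_def lam_def divide_inverse mult_ac)
  also have "\<dots> = ffact (real N) n / pochhammer (?t + real N) n * (pochhammer (?t + real N) k / ffact (real N) k)
     * (if k = n then 1 else 0)" using a_identity[OF apos kn] by simp
  also have "\<dots> = (if k = n then 1 else 0)"
  proof -
    have "ffact (real N) n \<noteq> 0" using nN by (simp add: ffact_nat)
    moreover have "pochhammer (?t + real N) n > 0" using apos by (intro pochhammer_pos) simp
    ultimately show ?thesis by auto
  qed
  finally show ?thesis .
qed

lemma B_tri_q:
  assumes js: "\<forall>i. d \<le> i \<longrightarrow> j i = 0" and jk: "(\<Sum>i<d. j i) = k"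
  shows "(\<lambda>s. Bop (q_j d \<alpha> j) s - mu k * q_j d \<alpha> j s) \<in> PL d N k"
proof -
  have "(\<lambda>s. \<Sum>m\<le>n. Cm m * (Aop d \<alpha> N m (q_j d \<alpha> j) s - lam (abs_alpha d \<alpha>) N m k * q_j d \<alpha> j s)) \<in> PL d N k"
  proof (rule PL_sum, simp, rule PL_scale)
    fix m assume "m \<in> {..n}"
    then have "m \<le> N" using nN by simp
    then show "(\<lambda>s. Aop d \<alpha> N m (q_j d \<alpha> j) s - lam (abs_alpha d \<alpha>) N m k * q_j d \<alpha> j s) \<in> PL d N k"
      using A_tri[OF pos apos _ js jk] by blast
  qed
  then show ?thesis
    by (rule PL_ext) (simp add: B_Aop mu_def right_diff_distrib sum_subtractf sum_distrib_left mult_ac)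
qed

lemma B_zero: "(\<And>r. r \<in> simplex d N \<Longrightarrow> f r = 0) \<Longrightarrow> Bop f s = 0"
  unfolding Bop_def by (simp)

lemma B_tri: "k \<le> n \<Longrightarrow> f \<in> PL d N (Suc k) \<Longrightarrow> (\<lambda>s. Bop f s - mu k * f s) \<in> PL d N k"
proof (induction k arbitrary: f rule: less_induct)
  case (less k)
  have presS: "Bop g \<in> PL d N (Suc j)" if "j < k" "g \<in> PL d N (Suc j)" for j g
  proof -
    have "(\<lambda>s. Bop g s - mu j * g s) \<in> PL d N j" using less.IH[of j g] that less.prems by simp
    then have "(\<lambda>s. (Bop g s - mu j * g s) + mu j * g s) \<in> PL d N (Suc j)"
      by (intro PL_add PL_scale that(2)) (rule PL_mono, auto)
    then show ?thesis by simp
  qed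
  have pres: "Bop g \<in> PL d N k" if "g \<in> PL d N k" for g
  proof (cases k)
    case 0
    then show ?thesis using that by (intro PL_zero_fun B_zero) (auto dest: PL_0_zero)
  next
    case (Suc k')
    then show ?thesis using presS[of k' g] that by simp
  qed
  obtain c where c: "\<forall>r\<in>simplex d N. f r = (\<Sum>b\<in>midx_lt d (Suc k). c b * Defs.monom d b r)"
    using less.prems(2) unfolding PL_def by auto
  have "(\<lambda>s. \<Sum>b\<in>midx_lt d (Suc k). c b * (Bop (Defs.monom d b) s - mu k * Defs.monom d b s)) \<in> PL d N k"
  proof (rule PL_sum[OF finite_midx_lt], rule PL_scale)
    fix b assume b: "b \<in> midx_lt d (Suc k)"
    define j where "j = (\<Sum>i<d. b i)"
    have jk: "j \<le> k" and bs: "\<forall>i. d \<le> i \<longrightarrow> b i = 0" using b unfolding midx_lt_def j_def by auto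
    have mb: "Defs.monom d b \<in> PL d N (Suc j)" unfolding j_def by (rule PL_monom[OF bs]) simp
    show "(\<lambda>s. Bop (Defs.monom d b) s - mu k * Defs.monom d b s) \<in> PL d N k"
    proof (cases "j < k")
      case True
      have "Bop (Defs.monom d b) \<in> PL d N k" using presS[OF True mb] PL_mono True by simp
      moreover have "Defs.monom d b \<in> PL d N k" using PL_mono[OF mb] True by simp
      ultimately show ?thesis by (intro PL_diff PL_scale)
    next
      case False
      then have jk': "j = k" using jk by simp
      have qm: "(\<lambda>r. q_j d \<alpha> b r - Defs.monom d b r) \<in> PL d N k"
        using q_j_PL(2)[of d \<alpha> b N] jk' unfolding j_def by simp
      have t1: "(\<lambda>s. Bop (q_j d \<alpha> b) s - mu k * q_j d \<alpha> b s) \<in> PL d N k"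
        using B_tri_q[OF bs] jk' unfolding j_def by simp
      have t2: "Bop (\<lambda>r. q_j d \<alpha> b r - Defs.monom d b r) \<in> PL d N k" by (rule pres[OF qm])
      have "(\<lambda>s. (Bop (q_j d \<alpha> b) s - mu k * q_j d \<alpha> b s) - Bop (\<lambda>r. q_j d \<alpha> b r - Defs.monom d b r) s
              + mu k * (q_j d \<alpha> b s - Defs.monom d b s)) \<in> PL d N k"
        by (intro PL_add PL_diff PL_scale t1 t2 qm)
      then show ?thesis by (rule PL_ext) (simp add: B_diff algebra_simps)
    qed
  qed
  then show ?case
  proof (rule PL_ext)
    fix s assume s: "s \<in> simplex d N"
    have "Bop f s = Bop (\<lambda>r. \<Sum>b\<in>midx_lt d (Suc k). c b * Defs.monom d b r) s"
      using c by (intro B_cong) auto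
    also have "\<dots> = (\<Sum>b\<in>midx_lt d (Suc k). c b * Bop (Defs.monom d b) s)"
      by (simp add: B_sum[OF finite_midx_lt] B_scale)
    finally show "Bop f s - mu k * f s = (\<Sum>b\<in>midx_lt d (Suc k). c b * (Bop (Defs.monom d b) s - mu k * Defs.monom d b s))"
      using c s by (simp add: algebra_simps sum_subtractf sum_distrib_left)
  qed
qed


lemma DM_S_pos: "DM d \<alpha> r N > 0"
  by (rule DM_pos[OF pos apos])

lemma sq_zero:
  assumes "(\<Sum>s\<in>simplex d N. DM d \<alpha> s N * h s * h s) = 0" and s: "s \<in> simplex d N"
  shows "h s = 0"
proof -
  have nn: "\<forall>x\<in>simplex d N. 0 \<le> DM d \<alpha> x N * h x * h x"
  proof
    fix x
    have "0 \<le> h x * h x" by simp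
    moreover have "0 \<le> DM d \<alpha> x N" using DM_S_pos[of x] by simp
    ultimately show "0 \<le> DM d \<alpha> x N * h x * h x" by (simp add: mult.assoc)
  qed
  have "DM d \<alpha> s N * h s * h s = 0"
    using sum_nonneg_eq_0_iff[of "simplex d N" "\<lambda>x. DM d \<alpha> x N * h x * h x"] finite_simplex nn assms by auto
  then show ?thesis using DM_S_pos[of s] by simp
qed

lemma B_nil: "k < n \<Longrightarrow> f \<in> PL d N (Suc k) \<Longrightarrow> s \<in> simplex d N \<Longrightarrow> Bop f s = 0"
proof (induction k arbitrary: f s)
  case 0
  have "(\<lambda>s. Bop f s - mu 0 * f s) \<in> PL d N 0" using B_tri[of 0 f] 0 by simp
  moreover have "mu 0 = 0" using mu_val[of 0] 0 by simp
  ultimately show ?case using PL_0_zero 0 by fastforce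
next
  case (Suc k)
  have "(\<lambda>s. Bop f s - mu (Suc k) * f s) \<in> PL d N (Suc k)" using B_tri[of "Suc k" f] Suc by simp
  moreover have "mu (Suc k) = 0" using mu_val[of "Suc k"] Suc by simp
  ultimately have Bf: "Bop f \<in> PL d N (Suc k)" by simp
  have BB: "Bop (Bop f) r = 0" if "r \<in> simplex d N" for r using Suc.IH[OF _ Bf that] Suc.prems by simp
  have "(\<Sum>s\<in>simplex d N. DM d \<alpha> s N * Bop f s * Bop f s) = (\<Sum>r\<in>simplex d N. DM d \<alpha> r N * f r * Bop (Bop f) r)"
    by (rule B_selfadj)
  also have "\<dots> = 0" using BB by simp
  finally show ?case using sq_zero Suc.prems by blast
qed

lemma B_repr: "f \<in> orth_polys d \<alpha> N n \<Longrightarrow> s \<in> simplex d N \<Longrightarrow> Bop f s = f s"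
proof -
  assume f: "f \<in> orth_polys d \<alpha> N n" and s: "s \<in> simplex d N"
  have fP: "f \<in> PL d N (Suc n)" using f unfolding orth_polys_def PL_le by simp
  define h where "h s = Bop f s - f s" for s
  have hP: "h \<in> PL d N n" using B_tri[OF order.refl fP] mu_val[of n] unfolding h_def by simp
  have "(\<Sum>s\<in>simplex d N. DM d \<alpha> s N * h s * h s) = 0"
  proof (cases n)
    case 0
    then show ?thesis using hP PL_0_zero by (simp add: sum.neutral)
  next
    case (Suc n')
    have hl: "h \<in> polys_le d N n'" using hP Suc by (simp add: PL_le)
    have o: "ipDM d \<alpha> N f h = 0" using f hl Suc unfolding orth_polys_def by auto
    have Bh: "Bop h r = 0" if "r \<in> simplex d N" for r
      using B_nil[of n' h r] hP Suc that by simp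
    have "(\<Sum>s\<in>simplex d N. DM d \<alpha> s N * Bop f s * h s) = (\<Sum>r\<in>simplex d N. DM d \<alpha> r N * f r * Bop h r)"
      by (rule B_selfadj)
    also have "\<dots> = 0" using Bh by simp
    finally have A: "(\<Sum>s\<in>simplex d N. DM d \<alpha> s N * Bop f s * h s) = 0" .
    have "(\<Sum>s\<in>simplex d N. DM d \<alpha> s N * h s * h s)
        = (\<Sum>s\<in>simplex d N. DM d \<alpha> s N * Bop f s * h s) - ipDM d \<alpha> N f h"
    proof -
      have t: "DM d \<alpha> x N * Bop f x * h x - DM d \<alpha> x N * f x * h x = DM d \<alpha> x N * h x * h x" for x
        unfolding h_def by (simp add: algebra_simps)
      show ?thesis unfolding ipDM_def sum_subtractf[symmetric] t ..
    qed
    then show ?thesis using A o by simp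
  qed
  then have "h s = 0" using sq_zero s by blast
  then show ?thesis unfolding h_def by simp
qed

lemma GG_orth: "s \<in> simplex d N \<Longrightarrow> (\<lambda>r. GG r s) \<in> orth_polys d \<alpha> N n"
proof -
  assume s: "s \<in> simplex d N"
  have "(\<lambda>r. ffact (real N) n / pochhammer (abs_alpha d \<alpha> + real N) n
         * (\<Sum>m\<le>n. a_coef (abs_alpha d \<alpha>) n m * chiH d \<alpha> N m r s)) \<in> PL d N (Suc n)"
  proof (intro PL_scale PL_sum)
    fix m assume "m \<in> {..n}"
    then show "(\<lambda>r. chiH d \<alpha> N m r s) \<in> PL d N (Suc n)" using PL_mono[OF chiH_PL] by simp
  qed simp
  then have P: "(\<lambda>r. GG r s) \<in> polys_le d N n" unfolding GG_def PL_le .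
  have O: "ipDM d \<alpha> N (\<lambda>r. GG r s) g = 0" if "k < n" "g \<in> polys_le d N k" for g k
  proof -
    have "ipDM d \<alpha> N (\<lambda>r. GG r s) g = Bop g s" unfolding ipDM_def Bop_def ..
    also have "\<dots> = 0" using B_nil[of k g s] that s by (simp add: PL_le)
    finally show ?thesis .
  qed
  show ?thesis unfolding orth_polys_def using P O by blast
qed

end

theorem proposition3p4:
  fixes d N n :: nat and \<alpha> :: "nat \<Rightarrow> real"
    and Ps :: "((nat \<Rightarrow> nat) \<Rightarrow> real) list" and r s :: "nat \<Rightarrow> nat"
  assumes "d \<ge> 2"
    and "\<And>i. i < d \<Longrightarrow> \<alpha> i > 0"
    and "n \<le> N"
    and "r \<in> simplex d N" and "s \<in> simplex d N"
    and "is_onb d \<alpha> N n Ps"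
  shows "(\<Sum>k<length Ps. (Ps!k) r * (Ps!k) s)
       = ffact (real N) n / pochhammer (abs_alpha d \<alpha> + real N) n
         * (\<Sum>m\<le>n. a_coef (abs_alpha d \<alpha>) n m * chiH d \<alpha> N m r s)"
proof -
  note pos = assms(2)
  have apos: "abs_alpha d \<alpha> > 0" using abs_alpha_pos[of d \<alpha>] assms(1) pos by simp
  note nN = assms(3)
  let ?G = "GG d N n \<alpha>"
  have onb: "\<forall>P\<in>set Ps. P \<in> orth_polys d \<alpha> N n"
    "\<forall>j<length Ps. \<forall>k<length Ps. ipDM d \<alpha> N (Ps!j) (Ps!k) = (if j = k then 1 else 0)"
    "\<forall>f\<in>orth_polys d \<alpha> N n. \<exists>c. \<forall>r\<in>simplex d N. f r = (\<Sum>k<length Ps. c k * (Ps!k) r)"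
    using assms(6) unfolding is_onb_def by auto
  have Gor: "(\<lambda>x. ?G x s) \<in> orth_polys d \<alpha> N n"
    by (rule GG_orth) (use pos apos nN assms(5) in auto)
  obtain c where c: "\<forall>x\<in>simplex d N. ?G x s = (\<Sum>k<length Ps. c k * (Ps!k) x)"
    using bspec[OF onb(3) Gor] by auto
  have cj: "c j = (Ps!j) s" if j: "j < length Ps" for j
  proof -
    have "ipDM d \<alpha> N (\<lambda>x. ?G x s) (Ps!j) = Bop d N n \<alpha> (Ps!j) s"
      unfolding ipDM_def by (rule Bop_def[symmetric]) (use pos apos nN in auto)
    also have "\<dots> = (Ps!j) s"
      by (rule B_repr) (use pos apos nN assms(5) onb(1) j in auto)
    finally have e1: "ipDM d \<alpha> N (\<lambda>x. ?G x s) (Ps!j) = (Ps!j) s" .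
    have "ipDM d \<alpha> N (\<lambda>x. ?G x s) (Ps!j)
        = (\<Sum>x\<in>simplex d N. DM d \<alpha> x N * (\<Sum>k<length Ps. c k * (Ps!k) x) * (Ps!j) x)"
      unfolding ipDM_def using c by (intro sum.cong) auto
    also have "\<dots> = (\<Sum>k<length Ps. c k * ipDM d \<alpha> N (Ps!k) (Ps!j))"
      unfolding ipDM_def sum_distrib_left sum_distrib_right
      by (subst sum.swap) (simp add: mult_ac)
    also have "\<dots> = (\<Sum>k<length Ps. if k = j then c k else 0)"
      using onb(2) j by (intro sum.cong) auto
    also have "\<dots> = c j" using j by simp
    finally show ?thesis using e1 by simp
  qed
  have "?G r s = (\<Sum>k<length Ps. c k * (Ps!k) r)" using c assms(4) by blast
  also have "\<dots> = (\<Sum>k<length Ps. (Ps!k) r * (Ps!k) s)" using cj by (intro sum.cong) auto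
  finally have "?G r s = (\<Sum>k<length Ps. (Ps!k) r * (Ps!k) s)" .
  moreover have "?G r s = ffact (real N) n / pochhammer (abs_alpha d \<alpha> + real N) n
         * (\<Sum>m\<le>n. a_coef (abs_alpha d \<alpha>) n m * chiH d \<alpha> N m r s)"
    by (rule GG_def) (use pos apos nN in auto)
  ultimately show ?thesis by simp
qed


end
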